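(* Let $$\alpha=\frac{1}{3}\left(3+\sqrt[3]{\tfrac12\left(27-3\sqrt{69}\right)}+\sqrt[3]{\tfrac12\left(27+3\sqrt{69}\right)}\right)\approx 2.3247,$$ $$\beta=\frac{1}{3}\left(2+\sqrt[3]{\tfrac12\left(97-3\sqrt{69}\right)}+\sqrt[3]{\tfrac12\left(97+3\sqrt{69}\right)}\right)\approx 3.0796,$$ let $g(x)=\alpha x(1-x)$, $h(x)=\beta x(1-x)$, and let $$p_\pm=\frac{\beta+1\pm\sqrt{(\beta+1)(\beta-3)}}{2\beta}$$ be the period-2 points of $h$. Then (a) $p_-=\frac{\alpha-1}{\alpha}$, (b) $h\!\left(\frac1\alpha\right)=p_+$, and (c) $g(p_+)=\frac1\alpha$. Consequently the set $\Lambda=\left\{\frac{\alpha-1}{\alpha},\ \frac1\alpha,\ p_+\right\}$ consists of three points, satisfies $\Lambda=g(\Lambda)\cup h(\Lambda)$ (a 3-point toss-and-catch), and contains the bridging point $\frac1\alpha$, which is a periodic point of neither $g$ nor $h$.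
   Context: For $\gamma\in\mathbb{R}$ let $f_\gamma(x)=\gamma x(1-x)$ denote the logistic map; its nontrivial fixed point is $\frac{\gamma-1}{\gamma}$. The logistic IFS is the pair $\{g,h\}=\{f_\alpha,f_\beta\}$ with $\alpha<\beta$, where at each step $g$ is applied with probability $p\in(0,1)$ and $h$ with probability $1-p$, independently. An invariant set of the IFS is a set $\Lambda$ with $\Lambda=g(\Lambda)\cup h(\Lambda)$; a finite invariant set with $n$ points is called an $n$-point toss-and-catch. A bridging point is a point of $\Lambda$ that belongs to neither the union $\Lambda_g$ of all periodic orbits of $g$ nor the union $\Lambda_h$ of all periodic orbits of $h$. *)

theory Defs
  imports Complex_Main
begin

definition logistic :: "real \<Rightarrow> real \<Rightarrow> real" where
  "logistic \<gamma> x = \<gamma> * x * (1 - x)"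

definition periodic_point :: "(real \<Rightarrow> real) \<Rightarrow> real \<Rightarrow> bool" where
  "periodic_point f x \<longleftrightarrow> (\<exists>n>0. (f ^^ n) x = x)"

definition ifs_invariant :: "(real \<Rightarrow> real) \<Rightarrow> (real \<Rightarrow> real) \<Rightarrow> real set \<Rightarrow> bool" where
  "ifs_invariant g h \<Lambda> \<longleftrightarrow> \<Lambda> = g ` \<Lambda> \<union> h ` \<Lambda>"

definition bridging_point :: "(real \<Rightarrow> real) \<Rightarrow> (real \<Rightarrow> real) \<Rightarrow> real set \<Rightarrow> real \<Rightarrow> bool" where
  "bridging_point g h \<Lambda> x \<longleftrightarrow> x \<in> \<Lambda> \<and> \<not> periodic_point g x \<and> \<not> periodic_point h x"

end

theory Submission
  imports Defs
begin

lemma cub: fixes u v c d :: real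
  assumes "u = root 3 ((c - 3 * sqrt 69) / 2)" "v = root 3 ((c + 3 * sqrt 69) / 2)"
   "(c*c - 9*69)/4 = d^3" "d \<ge> 0"
  shows "(u+v)^3 = c + 3*d*(u+v)"
proof -
  have s: "sqrt 69 ^2 = 69" by simp
  have u3: "u^3 = (c - 3 * sqrt 69) / 2" using assms(1) by (simp add: odd_real_root_pow)
  have v3: "v^3 = (c + 3 * sqrt 69) / 2" using assms(2) by (simp add: odd_real_root_pow)
  have "u*v = root 3 (((c - 3 * sqrt 69) / 2) * ((c + 3 * sqrt 69) / 2))"
    using assms by (simp only: real_root_mult)
  also have "((c - 3 * sqrt 69) / 2) * ((c + 3 * sqrt 69) / 2) = d^3"
    using assms(3) s by (simp add: field_simps power2_eq_square) 
  also have "root 3 (d^3) = d" using assms(4) by (simp add: real_root_power_cancel)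
  finally have uv: "u*v = d" .
  have "(u+v)^3 = u^3 + v^3 + 3*(u*v)*(u+v)" by (simp add: power3_eq_cube algebra_simps)
  then show ?thesis using u3 v3 uv by (simp add: field_simps)
qed

lemma pos: "0 < root 3 ((c - 3 * sqrt 69) / 2) + root 3 ((c + 3 * sqrt 69) / 2)" if "c \<ge> 27" for c :: real
proof -
  have "sqrt 69 < sqrt (9^2)" by (simp only: real_sqrt_less_iff) simp
  then have h9: "sqrt 69 < 9" by simp
  have h0: "sqrt 69 \<ge> 0" by simp
  have "3 * sqrt 69 < 27" using h9 by simp
  then have "0 < c - 3 * sqrt 69" using that by simp
  then have "0 < (c - 3 * sqrt 69) / 2" by simp
  moreover have "0 < c + 3 * sqrt 69" using that h0 by (intro add_pos_nonneg) auto
  then have "0 < (c + 3 * sqrt 69) / 2" by simp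
  ultimately show ?thesis by (intro add_pos_pos real_root_gt_zero) auto
qed

lemma alg1: fixes a :: real assumes "a^3 = a + 1" shows "(a^2+a)^3 - 2*(a^2+a)^2 - 3*(a^2+a) - 1 = 0"
  using assms by algebra
lemma alg2: fixes a :: real assumes "a^3 = a + 1" shows "(1+a-a^2)^2 = ((a^2+a)+1)*((a^2+a)-3)"
  using assms by algebra
lemma alg3: fixes a :: real assumes "a^3 = a + 1" "a > 1" shows "logistic (a^2+a) (1/(a+1)) = 1/a"
  using assms unfolding logistic_def by (simp add: field_simps) algebra

theorem mainTheorem2:
  fixes \<alpha> \<beta> p_plus p_minus :: real and g h :: "real \<Rightarrow> real" and \<Lambda> :: "real set"
  assumes A: "\<alpha> = (3 + root 3 ((27 - 3 * sqrt 69) / 2) + root 3 ((27 + 3 * sqrt 69) / 2)) / 3"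
      and B: "\<beta> = (2 + root 3 ((97 - 3 * sqrt 69) / 2) + root 3 ((97 + 3 * sqrt 69) / 2)) / 3"
      and G: "g = logistic \<alpha>"
      and H: "h = logistic \<beta>"
      and PP: "p_plus = (\<beta> + 1 + sqrt ((\<beta> + 1) * (\<beta> - 3))) / (2 * \<beta>)"
      and PM: "p_minus = (\<beta> + 1 - sqrt ((\<beta> + 1) * (\<beta> - 3))) / (2 * \<beta>)"
      and L: "\<Lambda> = {(\<alpha> - 1) / \<alpha>, 1 / \<alpha>, p_plus}"
  shows "p_minus = (\<alpha> - 1) / \<alpha>
       \<and> h (1 / \<alpha>) = p_plus
       \<and> g p_plus = 1 / \<alpha>
       \<and> card \<Lambda> = 3
       \<and> ifs_invariant g h \<Lambda>
       \<and> bridging_point g h \<Lambda> (1 / \<alpha>)"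
proof -
  define a where "a = \<alpha> - 1"
  define t where "t = root 3 ((27 - 3 * sqrt 69) / 2) + root 3 ((27 + 3 * sqrt 69) / 2)"
  define s where "s = root 3 ((97 - 3 * sqrt 69) / 2) + root 3 ((97 + 3 * sqrt 69) / 2)"
  have t3: "t^3 = 27 + 3*3*t" unfolding t_def by (rule cub) auto
  have s3: "s^3 = 97 + 3*13*s" unfolding s_def by (rule cub) auto
  have tpos: "t > 0" unfolding t_def by (rule pos) simp
  have spos: "s > 0" unfolding s_def by (rule pos) simp
  have at: "t = 3*a" using A unfolding a_def t_def by simp
  have bs: "s = 3*\<beta> - 2" using B unfolding s_def by simp
  have a3: "a^3 = a + 1" using t3 at by algebra
  have b3: "\<beta>^3 - 2*\<beta>^2 - 3*\<beta> - 1 = 0" using s3 bs by algebra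
  have apos: "a > 0" using tpos at by simp
  have a1: "a > 1"
  proof (rule ccontr)
    assume "\<not> a > 1"
    then have "a^3 \<le> a" using apos by (simp add: power3_eq_cube mult_le_one)
    then show False using a3 by simp
  qed
  have a2: "a^2 < a + 1"
  proof (rule ccontr)
    assume "\<not> a^2 < a + 1"
    then have "a * a^2 \<ge> a * (a+1)" using apos by (simp add: mult_left_mono)
    then have "a^3 \<ge> a^2 + a" by (simp add: power2_eq_square power3_eq_cube algebra_simps)
    then show False using a3 \<open>\<not> a^2 < a + 1\<close> apos by simp
  qed
  have b2: "\<beta> > 2"
  proof (rule ccontr)
    assume "\<not> \<beta> > 2"
    have "\<beta> > 0" using spos bs by simp
    have "\<beta>^2 * (\<beta> - 2) \<le> 0" using \<open>\<not> \<beta> > 2\<close> by (simp add: mult_nonneg_nonpos)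
    then have "\<beta>^3 - 2*\<beta>^2 \<le> 0" by (simp add: power2_eq_square power3_eq_cube algebra_simps)
    then show False using b3 \<open>\<beta> > 0\<close> by linarith
  qed
  define b' where "b' = a^2 + a"
  have b'3: "b'^3 - 2*b'^2 - 3*b' - 1 = 0" unfolding b'_def using alg1[OF a3] .
  have b'2: "b' > 2" unfolding b'_def using one_less_power[OF a1, of 2] a1 by linarith
  have fac: "(\<beta> - b') * (\<beta>^2 + \<beta>*b' + b'^2 - 2*\<beta> - 2*b' - 3) = 0"
    using b3 b'3 by algebra
  have "\<beta>^2 - 2*\<beta> > 0" using b2 by (simp add: power2_eq_square)
  moreover have "b'^2 - 2*b' > 0" using b'2 by (simp add: power2_eq_square)
  moreover have "\<beta>*b' > 3" using mult_strict_mono[of 2 \<beta> 2 b'] b2 b'2 by simp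
  ultimately have "\<beta>^2 + \<beta>*b' + b'^2 - 2*\<beta> - 2*b' - 3 \<noteq> 0" by linarith
  then have beq: "\<beta> = a^2 + a" using fac unfolding b'_def by simp
  have sq: "sqrt ((\<beta> + 1) * (\<beta> - 3)) = 1 + a - a^2"
    using alg2[OF a3] a2 beq by (intro real_sqrt_unique) auto
  have al: "\<alpha> = a + 1" unfolding a_def by simp
  have pp: "p_plus = 1/a"
  proof -
    have "a^2 > 0" using apos by simp
    then have nzp: "2*(a^2+a) > 0" using apos by (simp add: add_pos_pos)
    then have nz: "2*(a^2+a) \<noteq> 0" by linarith
    have "p_plus = (a^2 + a + 1 + (1 + a - a^2)) / (2 * (a^2 + a))" using PP sq beq by simp
    also have "\<dots> = 1/a" using apos nz by (simp add: field_simps power2_eq_square)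
    finally show ?thesis .
  qed
  have pm: "p_minus = a/(a+1)"
  proof -
    have "a^2 > 0" using apos by simp
    then have nzp: "2*(a^2+a) > 0" using apos by (simp add: add_pos_pos)
    then have nz: "2*(a^2+a) \<noteq> 0" by linarith
    have "p_minus = (a^2 + a + 1 - (1 + a - a^2)) / (2 * (a^2 + a))" using PM sq beq by simp
    also have "\<dots> = a/(a+1)" using apos nz by (simp add: field_simps power2_eq_square)
    finally show ?thesis .
  qed
  have ap1: "a + 1 \<noteq> 0" using apos by simp
  have om: "1 - a/(a+1) = 1/(a+1)" using ap1 by (simp add: field_simps)
  have gq: "logistic (a+1) (a/(a+1)) = a/(a+1)" using ap1
    unfolding logistic_def om by simp
  have gr: "logistic (a+1) (1/(a+1)) = a/(a+1)" using apos
    unfolding logistic_def by (simp add: field_simps)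
  have gP: "logistic (a+1) (1/a) = 1/(a+1)"
  proof -
    have "logistic (a+1) (1/a) = (a+1)*(a-1)/a^2" using apos
      unfolding logistic_def by (simp add: field_simps power2_eq_square)
    also have "\<dots> = 1/(a+1)" using apos a3 by (simp add: field_simps power2_eq_square) algebra
    finally show ?thesis .
  qed
  have hr: "logistic (a^2+a) (1/(a+1)) = 1/a" using alg3[OF a3 a1] .
  have om2: "1 - 1/(a+1) = a/(a+1)" using ap1 by (simp add: field_simps)
  have hq: "logistic (a^2+a) (a/(a+1)) = 1/a" using hr unfolding logistic_def om om2
    by (simp add: mult_ac)
  have hP: "logistic (a^2+a) (1/a) = a/(a+1)"
  proof -
    have "logistic (a^2+a) (1/a) = (a+1)*(a-1)/a" using apos
      unfolding logistic_def by (simp add: field_simps power2_eq_square)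
    also have "\<dots> = a/(a+1)" using apos a3 by (simp add: field_simps power2_eq_square) algebra
    finally show ?thesis .
  qed
  have d1: "a/(a+1) \<noteq> 1/(a+1)" using a1 apos by (simp add: field_simps)
  have d2: "1/a \<noteq> 1/(a+1)" using apos by (simp add: field_simps)
  have d3: "a/(a+1) \<noteq> 1/a" using apos a2 by (simp add: field_simps power2_eq_square)
  have Gs: "g = logistic (a+1)" using G al by simp
  have Hs: "h = logistic (a^2+a)" using H beq by simp
  have Ls: "\<Lambda> = {a/(a+1), 1/(a+1), 1/a}" using L al pp by simp
  have gn: "(g ^^ Suc n) (1/(a+1)) = a/(a+1)" for n
    by (induction n) (auto simp: Gs gr gq)
  have hn: "(h ^^ Suc n) (1/(a+1)) \<in> {1/a, a/(a+1)}" for n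
    by (induction n) (auto simp: Hs hr hq hP)
  have npg: "\<not> periodic_point g (1/(a+1))"
    unfolding periodic_point_def using gn d1 by (metis gr0_implies_Suc)
  have nph: "\<not> periodic_point h (1/(a+1))"
    unfolding periodic_point_def using hn d2 d1 by (metis gr0_implies_Suc insert_iff singletonD)
  have inv: "ifs_invariant g h \<Lambda>" unfolding ifs_invariant_def Ls Gs Hs
    using gq gr gP hq hr hP by auto
  have card: "card \<Lambda> = 3" unfolding Ls using d1 d2 d3 by auto
  show ?thesis using pm pp Hs Gs hr gP inv card npg nph Ls
    unfolding bridging_point_def al by auto
qed
end
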